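(* Let $d\ge 2$ and let ${\boldsymbol X}=(X_1,\dots,X_d)$ be a random vector with continuous marginal distribution functions $F_1,\dots,F_d$ whose copula $C$ is an extreme-value copula with Pickands dependence function $A$. For ${\boldsymbol w}=(w_1,\dots,w_{d-1})\in\mathcal S_{d-1}$ define the multivariate ${\boldsymbol w}$-madogram $$\nu({\boldsymbol w})=\mathbb E\Big[\max_{1\le i\le d}F_i^{1/w_i}(X_i)-\frac1d\sum_{i=1}^d F_i^{1/w_i}(X_i)\Big].$$ Then for all ${\boldsymbol w}\in\mathcal S_{d-1}$, $$\nu({\boldsymbol w})=\frac{A({\boldsymbol w})}{1+A({\boldsymbol w})}-c({\boldsymbol w}),\qquad A({\boldsymbol w})=\frac{\nu({\boldsymbol w})+c({\boldsymbol w})}{1-\nu({\boldsymbol w})-c({\boldsymbol w})},$$ where $c({\boldsymbol w})=d^{-1}\sum_{i=1}^d w_i/(1+w_i)$, and in particular $\nu({\boldsymbol w})+c({\boldsymbol w})<1$.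
   Context: $\mathcal S_{d-1}=\{(w_1,\dots,w_{d-1})\in[0,1]^{d-1}:\sum_{i=1}^{d-1}w_i\le1\}$, and for ${\boldsymbol w}\in\mathcal S_{d-1}$ one sets $w_d=1-w_1-\dots-w_{d-1}$. Convention: if $w_i=0$ then $u^{1/w_i}=0$ for $u\in[0,1]$. An extreme-value copula is a copula of the form $C(u_1,\dots,u_d)=\exp(-\ell(-\log u_1,\dots,-\log u_d))$ for ${\boldsymbol u}\in(0,1]^d$, where the stable tail dependence function $\ell:[0,\infty)^d\to[0,\infty)$ satisfies $\ell({\boldsymbol z})=(z_1+\dots+z_d)A({\boldsymbol w})$ with $w_i=z_i/(z_1+\dots+z_d)$ for $i=1,\dots,d-1$; the function $A:\mathcal S_{d-1}\to[1/d,1]$ is the Pickands dependence function. *)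

theory Defs
  imports "HOL-Probability.Probability"
begin

text \<open>Components are indexed by 0..d-1. A point of the simplex S_{d-1} is a function
 w :: nat => real whose first d-1 coordinates (indices 0..d-2) lie in [0,1] with sum <= 1;
 coordinates with index >= d-1 are required to be 0 (they carry no information).\<close>

definition simplexS :: "nat \<Rightarrow> (nat \<Rightarrow> real) set" where
  "simplexS d = {w. (\<forall>i<d-1. 0 \<le> w i \<and> w i \<le> 1) \<and> (\<Sum>i<d-1. w i) \<le> 1
                 \<and> (\<forall>i\<ge>d-1. w i = 0)}"

definition wfull :: "nat \<Rightarrow> (nat \<Rightarrow> real) \<Rightarrow> nat \<Rightarrow> real" where
  "wfull d w i = (if i < d - 1 then w i else 1 - (\<Sum>j<d-1. w j))"

definition pw :: "real \<Rightarrow> real \<Rightarrow> real" where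
  "pw u w = (if w = 0 then 0 else u powr (1 / w))"

definition stdf :: "nat \<Rightarrow> ((nat \<Rightarrow> real) \<Rightarrow> real) \<Rightarrow> (nat \<Rightarrow> real) \<Rightarrow> real" where
  "stdf d A z = (\<Sum>i<d. z i) *
     A (\<lambda>i. if i < d - 1 then z i / (\<Sum>j<d. z j) else 0)"

definition marg_cdf :: "'a measure \<Rightarrow> ('a \<Rightarrow> real) \<Rightarrow> real \<Rightarrow> real" where
  "marg_cdf M Y x = measure M {\<omega> \<in> space M. Y \<omega> \<le> x}"

definition madogram :: "'a measure \<Rightarrow> nat \<Rightarrow> (nat \<Rightarrow> 'a \<Rightarrow> real) \<Rightarrow> (nat \<Rightarrow> real) \<Rightarrow> real" where
  "madogram M d X w = (\<integral>\<omega>. (Max ((\<lambda>i. pw (marg_cdf M (X i) (X i \<omega>)) (wfull d w i)) ` {..<d})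
        - (1 / real d) * (\<Sum>i<d. pw (marg_cdf M (X i) (X i \<omega>)) (wfull d w i))) \<partial>M)"

definition cw :: "nat \<Rightarrow> (nat \<Rightarrow> real) \<Rightarrow> real" where
  "cw d w = (1 / real d) * (\<Sum>i<d. wfull d w i / (1 + wfull d w i))"

end

theory Submission imports Defs begin

lemma expect_from_cdf:
  fixes M :: "'a measure" and Y :: "'a \<Rightarrow> real" and a :: real
  assumes P: "prob_space M" and Ym[measurable]: "Y \<in> borel_measurable M"
    and bnd: "\<And>\<omega>. \<omega> \<in> space M \<Longrightarrow> 0 \<le> Y \<omega> \<and> Y \<omega> \<le> 1"
    and a: "0 < a"
    and cdf: "\<And>t. 0 < t \<Longrightarrow> t < 1 \<Longrightarrow> measure M {\<omega>\<in>space M. Y \<omega> \<le> t} = t powr a"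
  shows "integral\<^sup>L M Y = a / (1 + a)"
proof -
  interpret prob_space M by fact
  interpret pair_sigma_finite lborel M by unfold_locales
  define g where "g t \<omega> = (if 0 \<le> t \<and> t < Y \<omega> then 1 else 0::ennreal)" for t \<omega>
  have gm: "case_prod g \<in> borel_measurable (lborel \<Otimes>\<^sub>M M)"
    unfolding g_def by measurable
  have 1: "ennreal (Y \<omega>) = (\<integral>\<^sup>+t. g t \<omega> \<partial>lborel)" if "\<omega> \<in> space M" for \<omega>
  proof -
    have "(\<integral>\<^sup>+t. g t \<omega> \<partial>lborel) = (\<integral>\<^sup>+t. indicator {0..<Y \<omega>} t \<partial>lborel)"
      by (intro nn_integral_cong) (auto simp: g_def indicator_def)
    also have "\<dots> = emeasure lborel {0..<Y \<omega>}" by simp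
    also have "\<dots> = ennreal (Y \<omega>)" using bnd[OF that] by simp
    finally show ?thesis by simp
  qed
  have 2: "(\<integral>\<^sup>+\<omega>. g t \<omega> \<partial>M) = ennreal (indicator {0..1} t * (1 - t powr a))" if "t \<noteq> 0" for t
  proof -
    have "(\<integral>\<^sup>+\<omega>. g t \<omega> \<partial>M) = (\<integral>\<^sup>+\<omega>. indicator {\<omega>\<in>space M. 0 \<le> t \<and> t < Y \<omega>} \<omega> \<partial>M)"
      by (intro nn_integral_cong) (auto simp: g_def indicator_def)
    also have "\<dots> = emeasure M {\<omega>\<in>space M. 0 \<le> t \<and> t < Y \<omega>}"
      by (intro nn_integral_indicator) measurable
    also have "\<dots> = ennreal (indicator {0..1} t * (1 - t powr a))"
    proof (cases "0 < t \<and> t < 1")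
      case True
      have "{\<omega>\<in>space M. 0 \<le> t \<and> t < Y \<omega>} = space M - {\<omega>\<in>space M. Y \<omega> \<le> t}"
        using True by auto
      then have "emeasure M {\<omega>\<in>space M. 0 \<le> t \<and> t < Y \<omega>} = ennreal (1 - measure M {\<omega>\<in>space M. Y \<omega> \<le> t})"
        by (simp add: emeasure_eq_measure prob_compl)
      then show ?thesis using True cdf[of t] by (simp add: indicator_def)
    next
      case False
      then have "{\<omega>\<in>space M. 0 \<le> t \<and> t < Y \<omega>} = {}"
        using bnd that by force
      moreover have "indicator {0..1} t * (1 - t powr a) = 0"
        using False that by (auto simp: indicator_def)
      ultimately show ?thesis by (metis emeasure_empty ennreal_0)
    qed
    finally show ?thesis .
  qed
  have hi: "((\<lambda>t. indicator {0..1} t * (1 - t powr a)) has_integral (a / (1 + a))) UNIV"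
  proof -
    have h1: "((\<lambda>x. x powr a) has_integral (1 / (a+1))) {0..1}"
      using a has_integral_powr_from_0[of a 1] by simp
    have h2: "((\<lambda>x. 1::real) has_integral 1) {0..1::real}"
      using has_integral_const_real[of "1::real" 0 1] by simp
    have "((\<lambda>x. 1 - x powr a) has_integral (1 - 1 / (a+1))) {0..1}"
      by (rule has_integral_diff[OF h2 h1])
    moreover have "1 - 1 / (a+1) = a / (1 + a)" using a by (simp add: field_simps)
    ultimately have "((\<lambda>x. 1 - x powr a) has_integral (a / (1 + a))) {0..1}" by simp
    then have "((\<lambda>x. if x \<in> {0..1} then 1 - x powr a else 0) has_integral (a / (1 + a))) UNIV"
      by (subst has_integral_restrict_UNIV)
    moreover have "(\<lambda>x. if x \<in> {0..1} then 1 - x powr a else 0) = (\<lambda>t. indicator {0..1} t * (1 - t powr a))"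
      by (auto simp: indicator_def)
    ultimately show ?thesis by simp
  qed
  have "(\<integral>\<^sup>+\<omega>. ennreal (Y \<omega>) \<partial>M) = (\<integral>\<^sup>+\<omega>. (\<integral>\<^sup>+t. g t \<omega> \<partial>lborel) \<partial>M)"
    by (intro nn_integral_cong) (simp add: 1)
  also have "\<dots> = (\<integral>\<^sup>+t. (\<integral>\<^sup>+\<omega>. g t \<omega> \<partial>M) \<partial>lborel)"
    by (rule Fubini'[OF gm])
  also have "\<dots> = (\<integral>\<^sup>+t. ennreal (indicator {0..1} t * (1 - t powr a)) \<partial>lborel)"
    by (intro nn_integral_cong_AE) (use AE_lborel_singleton[of 0] 2 in auto)
  also have "\<dots> = ennreal (a / (1 + a))"
    by (rule nn_integral_has_integral_lborel[OF _ _ hi]) (use a in \<open>auto simp: indicator_def intro!: powr_le1\<close>)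
  finally have "(\<integral>\<^sup>+\<omega>. ennreal (Y \<omega>) \<partial>M) = ennreal (a / (1 + a))" .
  then show ?thesis
    using a bnd by (subst integral_eq_nn_integral) auto
qed

lemma marg_cdf_mono:
  assumes "prob_space M" "Z \<in> borel_measurable M" "x \<le> y"
  shows "marg_cdf M Z x \<le> marg_cdf M Z y"
proof -
  interpret prob_space M by fact
  show ?thesis unfolding marg_cdf_def
    using assms by (intro finite_measure_mono) auto
qed

lemma marg_cdf_eq_cdf:
  assumes "prob_space M" "Z \<in> borel_measurable M"
  shows "marg_cdf M Z = cdf (distr M borel Z)"
proof
  fix x
  have "Z -` {..x} \<inter> space M = {\<omega>\<in>space M. Z \<omega> \<le> x}" by auto
  then show "marg_cdf M Z x = cdf (distr M borel Z) x"
    using assms by (simp add: cdf_def marg_cdf_def measure_distr)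
qed

lemma unif:
  assumes P: "prob_space M" and Zm[measurable]: "Z \<in> borel_measurable M"
    and cont: "continuous_on UNIV (marg_cdf M Z)" and s: "0 < s" "s < 1"
  shows "measure M {\<omega>\<in>space M. marg_cdf M Z (Z \<omega>) \<le> s} = s"
proof -
  interpret prob_space M by fact
  define F where "F = marg_cdf M Z"
  have mono: "F x \<le> F y" if "x \<le> y" for x y
    unfolding F_def using marg_cdf_mono[OF P Zm that] .
  interpret rd: real_distribution "distr M borel Z" by (rule real_distribution_distr) simp
  have Fc: "F = cdf (distr M borel Z)" unfolding F_def by (rule marg_cdf_eq_cdf[OF P Zm])
  have lb: "(F \<longlongrightarrow> 0) at_bot" unfolding Fc by (rule rd.cdf_lim_at_bot)
  have lt: "(F \<longlongrightarrow> 1) at_top" unfolding Fc by (rule rd.cdf_lim_at_top_prob)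
  have "eventually (\<lambda>x. F x < s) at_bot" using order_tendstoD(2)[OF lb] s by auto
  then obtain a where a: "F a < s" unfolding eventually_at_bot_linorder by auto
  have "eventually (\<lambda>x. F x > s) at_top" using order_tendstoD(1)[OF lt] s by auto
  then obtain b where b: "F b > s" unfolding eventually_at_top_linorder by auto
  have ab: "a \<le> b" using a b mono[of b a] by force
  have contF: "continuous_on UNIV F" using cont unfolding F_def .
  obtain y where y: "F y = s"
    using IVT'[of F a s b] a b ab continuous_on_subset[OF contF] by force
  define S where "S = {x. F x \<le> s}"
  have cS: "closed S" unfolding S_def
    by (rule closed_Collect_le[OF contF]) (rule continuous_on_const)
  have bS: "bdd_above S" unfolding S_def bdd_above_def
    using b mono by (metis linorder_not_le mem_Collect_eq order.strict_trans2 less_le_not_le)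
  have yS: "y \<in> S" using y unfolding S_def by simp
  define x0 where "x0 = Sup S"
  have "x0 \<in> S" unfolding x0_def using closed_contains_Sup[OF _ bS cS] yS by auto
  moreover have "y \<le> x0" unfolding x0_def using cSup_upper[OF yS bS] .
  ultimately have Fx0: "F x0 = s" using mono[of y x0] y unfolding S_def by auto
  have "{\<omega>\<in>space M. F (Z \<omega>) \<le> s} = {\<omega>\<in>space M. Z \<omega> \<le> x0}"
  proof safe
    fix \<omega> assume "F (Z \<omega>) \<le> s"
    then have "Z \<omega> \<in> S" unfolding S_def by simp
    then show "Z \<omega> \<le> x0" unfolding x0_def using cSup_upper bS by blast
  next
    fix \<omega> assume "Z \<omega> \<le> x0"
    then show "F (Z \<omega>) \<le> s" using mono Fx0 by metis
  qed
  then show ?thesis using Fx0 unfolding F_def marg_cdf_def by simp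
qed

lemma pw_bounds:
  assumes "0 \<le> u" "u \<le> 1" "0 \<le> c"
  shows "0 \<le> pw u c \<and> pw u c \<le> 1"
  using assms by (auto simp: pw_def intro!: powr_le1)

lemma pw_le_iff:
  assumes u: "0 \<le> u" "u \<le> 1" and c: "0 \<le> c" and t: "0 < t" "t < 1"
  shows "pw u c \<le> t \<longleftrightarrow> u \<le> t powr c"
proof (cases "c = 0")
  case True then show ?thesis using u t by (simp add: pw_def)
next
  case False
  then have c': "0 < c" using c by simp
  show ?thesis
  proof
    assume h: "pw u c \<le> t"
    then have "u powr (1/c) \<le> t" using False by (simp add: pw_def)
    then have "(u powr (1/c)) powr c \<le> t powr c" using c u by (intro powr_mono2) auto
    then show "u \<le> t powr c" using c' u by (simp add: powr_powr)
  next
    assume h: "u \<le> t powr c"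
    then have "u powr (1/c) \<le> (t powr c) powr (1/c)" using c' u by (intro powr_mono2) auto
    then show "pw u c \<le> t" using c' t False by (simp add: powr_powr pw_def)
  qed
qed

lemma pw_measurable[measurable]:
  assumes [measurable]: "f \<in> borel_measurable M"
  shows "(\<lambda>\<omega>. pw (f \<omega>) c) \<in> borel_measurable M"
  unfolding pw_def by measurable

theorem mainTheorem1:
  fixes M :: "'a measure" and d :: nat and X :: "nat \<Rightarrow> 'a \<Rightarrow> real"
    and A :: "(nat \<Rightarrow> real) \<Rightarrow> real"
  assumes "prob_space M"
    and "d \<ge> 2"
    and "\<And>i. i < d \<Longrightarrow> X i \<in> borel_measurable M"
    and "\<And>i. i < d \<Longrightarrow> continuous_on UNIV (marg_cdf M (X i))"
    and "\<And>w. w \<in> simplexS d \<Longrightarrow> 1 / real d \<le> A w \<and> A w \<le> 1"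
    and "\<And>u. (\<forall>i<d. 0 < u i \<and> u i \<le> 1) \<Longrightarrow>
           measure M {\<omega> \<in> space M. \<forall>i<d. marg_cdf M (X i) (X i \<omega>) \<le> u i}
             = exp (- stdf d A (\<lambda>i. - ln (u i)))"
    and "w \<in> simplexS d"
  shows "madogram M d X w = A w / (1 + A w) - cw d w
       \<and> A w = (madogram M d X w + cw d w) / (1 - madogram M d X w - cw d w)
       \<and> madogram M d X w + cw d w < 1"
proof -
  note P = assms(1) and d2 = assms(2) and Xm = assms(3) and cont = assms(4)
    and Ab = assms(5) and cop = assms(6) and wS = assms(7)
  interpret prob_space M by fact
  define U where "U i \<omega> = marg_cdf M (X i) (X i \<omega>)" for i \<omega>
  define W where "W = wfull d w"
  have Um: "U i \<in> borel_measurable M" if "i < d" for i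
    unfolding U_def
    using measurable_compose[OF Xm[OF that] borel_measurable_continuous_onI[OF cont[OF that]]]
    by (simp add: comp_def)
  have Ub: "0 \<le> U i \<omega> \<and> U i \<omega> \<le> 1" for i \<omega>
    unfolding U_def marg_cdf_def by simp
  have w1: "0 \<le> w i \<and> w i \<le> 1" "(\<Sum>i<d-1. w i) \<le> 1" "w j = 0"
    if "i < d - 1" "j \<ge> d - 1" for i j
    using wS that unfolding simplexS_def by auto
  have wz: "w j = 0" if "j \<ge> d - 1" for j
    using wS that unfolding simplexS_def by auto
  have sum_nonneg_w: "0 \<le> (\<Sum>i<d-1. w i)"
    using w1(1) by (intro sum_nonneg) auto
  have Wb: "0 \<le> W i \<and> W i \<le> 1" if "i < d" for i
    using w1[of i "d-1"] w1(2)[of 0 "d-1"] sum_nonneg_w wS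
    unfolding W_def wfull_def simplexS_def by auto
  have Wsum: "(\<Sum>i<d. W i) = 1"
  proof -
    have "d = Suc (d - 1)" using d2 by simp
    then have "(\<Sum>i<d. W i) = (\<Sum>i<d-1. W i) + W (d - 1)"
      by (metis sum.lessThan_Suc)
    also have "(\<Sum>i<d-1. W i) = (\<Sum>i<d-1. w i)"
      by (intro sum.cong) (auto simp: W_def wfull_def)
    finally show ?thesis by (simp add: W_def wfull_def)
  qed
  have dpos: "0 < d" using d2 by simp
  have Aw: "1 / real d \<le> A w \<and> A w \<le> 1" using Ab[OF wS] .
  have Apos: "0 < A w" using Aw dpos by (smt (verit) of_nat_0_less_iff zero_less_divide_1_iff)
  define Ymax where "Ymax \<omega> = Max ((\<lambda>i. pw (U i \<omega>) (W i)) ` {..<d})" for \<omega>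
  define Yi where "Yi i \<omega> = pw (U i \<omega>) (W i)" for i \<omega>
  have Yim: "Yi i \<in> borel_measurable M" if "i < d" for i
    unfolding Yi_def using Um[OF that] by measurable
  have Yib: "0 \<le> Yi i \<omega> \<and> Yi i \<omega> \<le> 1" if "i < d" for i \<omega>
    unfolding Yi_def using pw_bounds Ub Wb[OF that] by blast
  have Ymaxm: "Ymax \<in> borel_measurable M"
    unfolding Ymax_def by (rule borel_measurable_Max) (auto intro!: pw_measurable Um)
  have fin: "finite {..<d}" and ne: "{..<d} \<noteq> {}" using dpos by auto
  have Ymaxb: "0 \<le> Ymax \<omega> \<and> Ymax \<omega> \<le> 1" for \<omega>
  proof -
    have "0 \<le> Ymax \<omega>" unfolding Ymax_def using Yib[OF dpos] fin ne
      by (subst Max_ge_iff) (auto simp: Yi_def intro!: bexI[of _ 0])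
    moreover have "Ymax \<omega> \<le> 1" unfolding Ymax_def using Yib fin ne
      by (subst Max_le_iff) (auto simp: Yi_def)
    ultimately show ?thesis by simp
  qed
  have EYmax: "integral\<^sup>L M Ymax = A w / (1 + A w)"
  proof (rule expect_from_cdf[OF P Ymaxm _ Apos])
    show "0 \<le> Ymax \<omega> \<and> Ymax \<omega> \<le> 1" for \<omega> by (rule Ymaxb)
  next
    fix t :: real assume t: "0 < t" "t < 1"
    have "{\<omega>\<in>space M. Ymax \<omega> \<le> t} = {\<omega>\<in>space M. \<forall>i<d. U i \<omega> \<le> t powr W i}"
      unfolding Ymax_def using fin ne pw_le_iff[OF _ _ _ t] Ub Wb
      by (subst Max_le_iff) auto
    also have "measure M \<dots> = exp (- stdf d A (\<lambda>i. - ln (t powr W i)))"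
      unfolding U_def
    proof (rule cop, intro allI impI conjI)
      fix i assume "i < d"
      show "0 < t powr W i" using t by simp
      show "t powr W i \<le> 1" using t Wb[OF \<open>i < d\<close>] by (intro powr_le1) auto
    qed
    also have "(\<lambda>i. - ln (t powr W i)) = (\<lambda>i. W i * (- ln t))"
      by (simp add: ln_powr)
    also have "stdf d A (\<lambda>i. W i * (- ln t)) = (- ln t) * A w"
    proof -
      have s: "(\<Sum>i<d. W i * (- ln t)) = - ln t"
        using Wsum by (simp only: sum_distrib_right[symmetric])
      have lt: "- ln t \<noteq> 0" using t by simp
      have "(\<lambda>i. if i < d - 1 then W i * (- ln t) / (\<Sum>j<d. W j * (- ln t)) else 0) = w"
      proof
        fix i show "(if i < d - 1 then W i * (- ln t) / (\<Sum>j<d. W j * (- ln t)) else 0) = w i"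
          using s lt wz[of i] by (auto simp: W_def wfull_def)
      qed
      then show ?thesis unfolding stdf_def s by simp
    qed
    also have "exp (- ((- ln t) * A w)) = t powr A w"
      using t by (simp add: powr_def)
    finally show "measure M {\<omega>\<in>space M. Ymax \<omega> \<le> t} = t powr A w" .
  qed
  have EYi: "integral\<^sup>L M (Yi i) = W i / (1 + W i)" if i: "i < d" for i
  proof (cases "W i = 0")
    case True
    then have "Yi i = (\<lambda>_. 0)" by (auto simp: Yi_def pw_def)
    then show ?thesis using True by simp
  next
    case False
    then have Wp: "0 < W i" using Wb[OF i] by simp
    show ?thesis
    proof (rule expect_from_cdf[OF P Yim[OF i] _ Wp])
      show "0 \<le> Yi i \<omega> \<and> Yi i \<omega> \<le> 1" for \<omega> by (rule Yib[OF i])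
    next
      fix t :: real assume t: "0 < t" "t < 1"
      have "{\<omega>\<in>space M. Yi i \<omega> \<le> t} = {\<omega>\<in>space M. marg_cdf M (X i) (X i \<omega>) \<le> t powr W i}"
        unfolding Yi_def using pw_le_iff[OF _ _ _ t] Ub Wb[OF i] by (auto simp: U_def)
      also have "measure M \<dots> = t powr W i"
        by (rule unif[OF P Xm[OF i] cont[OF i]]) (use t Wp in \<open>auto simp: powr01_less_one\<close>)
      finally show "measure M {\<omega>\<in>space M. Yi i \<omega> \<le> t} = t powr W i" .
    qed
  qed
  have intYmax: "integrable M Ymax"
    by (rule integrable_const_bound[where B=1]) (use Ymaxb Ymaxm in auto)
  have intYi: "integrable M (Yi i)" if "i < d" for i
    by (rule integrable_const_bound[where B=1]) (use Yib[OF that] Yim[OF that] in auto)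
  have mad: "madogram M d X w = integral\<^sup>L M Ymax - (1 / real d) * (\<Sum>i<d. integral\<^sup>L M (Yi i))"
  proof -
    have "madogram M d X w = integral\<^sup>L M (\<lambda>\<omega>. Ymax \<omega> - (1 / real d) * (\<Sum>i<d. Yi i \<omega>))"
      unfolding madogram_def Ymax_def Yi_def U_def W_def by simp
    also have "\<dots> = integral\<^sup>L M Ymax - integral\<^sup>L M (\<lambda>\<omega>. (1 / real d) * (\<Sum>i<d. Yi i \<omega>))"
      by (rule Bochner_Integration.integral_diff[OF intYmax])
         (intro integrable_mult_right integrable_sum, use intYi in auto)
    also have "integral\<^sup>L M (\<lambda>\<omega>. (1 / real d) * (\<Sum>i<d. Yi i \<omega>)) = (1 / real d) * (\<Sum>i<d. integral\<^sup>L M (Yi i))"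
    proof -
      have "integral\<^sup>L M (\<lambda>\<omega>. \<Sum>i<d. Yi i \<omega>) = (\<Sum>i<d. integral\<^sup>L M (Yi i))"
        by (rule Bochner_Integration.integral_sum) (use intYi in auto)
      then show ?thesis by simp
    qed
    finally show ?thesis .
  qed
  have cwW: "cw d w = (1 / real d) * (\<Sum>i<d. W i / (1 + W i))"
    unfolding cw_def W_def ..
  have nu: "madogram M d X w = A w / (1 + A w) - cw d w"
    unfolding mad EYmax cwW using EYi by simp
  have key: "madogram M d X w + cw d w = A w / (1 + A w)" using nu by simp
  show ?thesis
  proof (intro conjI)
    show "madogram M d X w = A w / (1 + A w) - cw d w" by (rule nu)
    show "A w = (madogram M d X w + cw d w) / (1 - madogram M d X w - cw d w)"
    proof -
      have den: "1 - madogram M d X w - cw d w = 1 / (1 + A w)"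
        using key Apos by (simp add: field_simps)
      have "(madogram M d X w + cw d w) / (1 - madogram M d X w - cw d w) = (A w / (1 + A w)) / (1 / (1 + A w))"
        unfolding den key ..
      also have "\<dots> = A w" using Apos by simp
      finally show ?thesis by simp
    qed
    show "madogram M d X w + cw d w < 1" using key Apos by simp
  qed
qed

end
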